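(* Let $f:\mathbb R^{d_x}\to\mathbb R^{d_y}$ be a $\textsc{ReLU}$+$\textsc{Step}$ network of width $d_x$ in which at least one hidden neuron uses the $\textsc{Step}$ activation. Then every level set of $f$ (i.e., every connected component of $f^{-1}(y)$ for some $y$) is unbounded unless it is empty.
   Context: $\textsc{ReLU}(x)=\max\{x,0\}$, $\textsc{Step}(x)=\mathbf 1[x\ge0]$. A $\textsc{ReLU}$+$\textsc{Step}$ network is $t_L\circ\sigma_{L-1}\circ\cdots\circ\sigma_1\circ t_1$ with affine $t_\ell:\mathbb R^{d_{\ell-1}}\to\mathbb R^{d_\ell}$ ($d_0=d_x$, $d_L=d_y$) and $\sigma_\ell$ applying to each coordinate an activation chosen per neuron from $\{\textsc{ReLU},\textsc{Step}\}$; its width is $\max\{d_1,\dots,d_{L-1}\}$. *)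

theory Defs
  imports "HOL-Analysis.Analysis"
begin

definition relu :: "real \<Rightarrow> real" where
  "relu z = max z 0"

definition step :: "real \<Rightarrow> real" where
  "step z = (if z \<ge> 0 then 1 else 0)"

definition activ :: "bool \<Rightarrow> real \<Rightarrow> real" where
  "activ s z = (if s then step z else relu z)"

text \<open>Hidden-layer outputs of a ReLU+Step network with input space 'a.
  d l is the width of layer l (l = 1..L-1).
  Components j >= d l of the returned function are irrelevant (never used).\<close>
fun hidden :: "(nat \<Rightarrow> nat) \<Rightarrow> (nat \<Rightarrow> 'a::euclidean_space) \<Rightarrow> (nat \<Rightarrow> real)
    \<Rightarrow> (nat \<Rightarrow> nat \<Rightarrow> nat \<Rightarrow> real) \<Rightarrow> (nat \<Rightarrow> nat \<Rightarrow> real) \<Rightarrow> (nat \<Rightarrow> nat \<Rightarrow> bool)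
    \<Rightarrow> nat \<Rightarrow> 'a \<Rightarrow> nat \<Rightarrow> real" where
  "hidden d A a W c s 0 x = (\<lambda>j. 0)"
| "hidden d A a W c s (Suc 0) x = (\<lambda>j. activ (s 1 j) (A j \<bullet> x + a j))"
| "hidden d A a W c s (Suc (Suc k)) x =
     (\<lambda>j. activ (s (Suc (Suc k)) j)
        ((\<Sum>i<d (Suc k). W (Suc (Suc k)) j i * hidden d A a W c s (Suc k) x i)
         + c (Suc (Suc k)) j))"

text \<open>The network t_L o sigma_{L-1} o ... o sigma_1 o t_1, with output layer
  t_L h = (\<Sum>i<d (L-1). h i *R V i) + v  (a general affine map R^{d (L-1)} -> 'b).\<close>
definition net :: "nat \<Rightarrow> (nat \<Rightarrow> nat) \<Rightarrow> (nat \<Rightarrow> 'a::euclidean_space) \<Rightarrow> (nat \<Rightarrow> real)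
    \<Rightarrow> (nat \<Rightarrow> nat \<Rightarrow> nat \<Rightarrow> real) \<Rightarrow> (nat \<Rightarrow> nat \<Rightarrow> real) \<Rightarrow> (nat \<Rightarrow> nat \<Rightarrow> bool)
    \<Rightarrow> (nat \<Rightarrow> 'b::euclidean_space) \<Rightarrow> 'b \<Rightarrow> 'a \<Rightarrow> 'b" where
  "net L d A a W c s V v x =
     (\<Sum>i<d (L - 1). hidden d A a W c s (L - 1) x i *\<^sub>R V i) + v"

definition width :: "nat \<Rightarrow> (nat \<Rightarrow> nat) \<Rightarrow> nat" where
  "width L d = Max (d ` {1..L - 1})"

end

theory Submission
  imports Defs "HOL-Analysis.Analysis"
begin


definition liftp :: "('a::euclidean_space \<Rightarrow> 'b::euclidean_space) \<Rightarrow> 'a \<Rightarrow> bool" where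
  "liftp \<phi> x \<longleftrightarrow> (\<forall>K. path_connected K \<longrightarrow> \<not> bounded K \<longrightarrow> \<phi> x \<in> K \<longrightarrow>
      (\<exists>S. path_connected S \<and> \<not> bounded S \<and> x \<in> S \<and> \<phi> ` S \<subseteq> K))"

lemma liftp_comp:
  assumes "liftp \<phi> x" "liftp \<psi> (\<phi> x)"
  shows "liftp (\<psi> \<circ> \<phi>) x"
proof -
  { fix K assume K: "path_connected K" "\<not> bounded K" "\<psi> (\<phi> x) \<in> K"
    then obtain S1 where S1: "path_connected S1" "\<not> bounded S1" "\<phi> x \<in> S1" "\<psi> ` S1 \<subseteq> K"
      using assms(2) unfolding liftp_def by blast
    then obtain S where "path_connected S" "\<not> bounded S" "x \<in> S" "\<phi> ` S \<subseteq> S1"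
      using assms(1) unfolding liftp_def by blast
    then have "\<exists>S. path_connected S \<and> \<not> bounded S \<and> x \<in> S \<and> (\<psi> \<circ> \<phi>) ` S \<subseteq> K"
      using S1 by (intro exI[of _ S]) (auto simp: image_subset_iff) }
  then show ?thesis unfolding liftp_def by auto
qed

lemma liftp_affine:
  fixes f :: "'a::euclidean_space \<Rightarrow> 'a"
  assumes lf: "linear f" and inj: "inj f"
  shows "liftp (\<lambda>z. f z + b) x"
proof -
  have surj: "surj f" using linear_injective_imp_surjective lf inj by blast
  obtain g where lg: "linear g" and gf: "g \<circ> f = id" using linear_injective_left_inverse[OF lf inj] by blast
  have gf': "g (f z) = z" for z using gf by (metis comp_apply id_apply)
  have fg: "f (g w) = w" for w using surj gf' by (metis surjD)
  { fix K assume K: "path_connected K" "\<not> bounded K" "f x + b \<in> K"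
    define S where "S = (\<lambda>k. g (k - b)) ` K"
    have cg: "continuous_on UNIV g" using lg by (simp add: linear_continuous_on linear_conv_bounded_linear)
    have "continuous_on K (\<lambda>k. g (k - b))"
      by (rule continuous_on_compose2[OF cg]) (auto intro: continuous_intros)
    then have pc: "path_connected S" unfolding S_def by (rule path_connected_continuous_image) (rule K(1))
    have "x = (\<lambda>k. g (k - b)) (f x + b)" by (simp add: gf')
    then have xS: "x \<in> S" unfolding S_def using K(3) by (rule image_eqI)
    have im: "(\<lambda>z. f z + b) ` S \<subseteq> K" unfolding S_def using fg by auto
    have Kim: "K \<subseteq> (\<lambda>z. f z + b) ` S" unfolding S_def
    proof
      fix k assume "k \<in> K"
      have "k = f (g (k - b)) + b" by (simp add: fg)
      then show "k \<in> (\<lambda>z. f z + b) ` (\<lambda>k. g (k - b)) ` K" using \<open>k \<in> K\<close> by blast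
    qed
    have ub: "\<not> bounded S"
    proof
      assume "bounded S"
      then have "bounded (f ` S)" using lf by (simp add: bounded_linear_image linear_conv_bounded_linear)
      then have "bounded ((\<lambda>z. b + z) ` (f ` S))" by (rule bounded_translation)
      then have "bounded ((\<lambda>z. f z + b) ` S)" by (simp add: image_image add.commute)
      then show False using Kim K(2) bounded_subset by blast
    qed
    have "\<exists>S. path_connected S \<and> \<not> bounded S \<and> x \<in> S \<and> (\<lambda>z. f z + b) ` S \<subseteq> K"
      using pc xS im ub by blast }
  then show ?thesis unfolding liftp_def by auto
qed



definition rho :: "'a::euclidean_space \<Rightarrow> 'a" where
  "rho z = (\<Sum>b\<in>Basis. relu (z \<bullet> b) *\<^sub>R b)"

definition orth :: "'a::euclidean_space set" where
  "orth = {z. \<forall>b\<in>Basis. 0 \<le> z \<bullet> b}"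

lemma rho_fix:
  assumes "z \<in> orth" shows "rho z = z"
proof -
  have "rho z = (\<Sum>b\<in>Basis. (z \<bullet> b) *\<^sub>R b)"
    unfolding rho_def using assms unfolding orth_def relu_def
    by (intro sum.cong) (auto simp: max_def)
  then show ?thesis by (simp add: euclidean_representation)
qed

lemma rho_ray:
  fixes z b :: "'a::euclidean_space"
  assumes b: "b \<in> Basis" and "z \<bullet> b \<le> 0" "t \<ge> 0"
  shows "rho (z - t *\<^sub>R b) = rho z"
  unfolding rho_def
proof (rule sum.cong[OF refl])
  fix b' :: 'a assume b': "b' \<in> Basis"
  show "relu ((z - t *\<^sub>R b) \<bullet> b') *\<^sub>R b' = relu (z \<bullet> b') *\<^sub>R b'"
  proof (cases "b' = b")
    case True then show ?thesis using assms b by (simp add: inner_diff_left relu_def)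
  next
    case False then show ?thesis using b b' by (simp add: inner_diff_left inner_Basis)
  qed
qed

lemma ray_unb:
  fixes z w :: "'a::real_normed_vector"
  assumes "w \<noteq> 0"
  shows "\<not> bounded ((\<lambda>t. z + t *\<^sub>R w) ` {0..})"
proof
  assume "bounded ((\<lambda>t. z + t *\<^sub>R w) ` {0..})"
  then obtain B where B: "\<And>t. t \<ge> 0 \<Longrightarrow> norm (z + t *\<^sub>R w) \<le> B"
    unfolding bounded_iff by auto
  define t where "t = (\<bar>B\<bar> + norm z + 1) / norm w"
  have nw: "norm w > 0" using assms by simp
  have t0: "t \<ge> 0" unfolding t_def using nw by simp
  have "norm (t *\<^sub>R w) = \<bar>B\<bar> + norm z + 1" unfolding t_def using nw by simp
  moreover have "norm (t *\<^sub>R w) \<le> norm (z + t *\<^sub>R w) + norm z"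
    by (metis add_diff_cancel_left' norm_triangle_ineq4 add.commute norm_minus_commute)
  ultimately show False using B[OF t0] by linarith
qed

lemma ray_pc:
  fixes z w :: "'a::real_normed_vector"
  shows "path_connected ((\<lambda>t. z + t *\<^sub>R w) ` {0..})"
  by (rule path_connected_continuous_image) (auto intro!: continuous_intros convex_imp_path_connected)



lemma closed_orth: "closed (orth :: 'a::euclidean_space set)"
proof -
  have "(orth :: 'a set) = (\<Inter>b\<in>Basis. {z. 0 \<le> z \<bullet> b})" unfolding orth_def by auto
  moreover have "closed (\<Inter>b\<in>(Basis::'a set). {z. 0 \<le> z \<bullet> b})"
    by (intro closed_INT ballI closed_Collect_le continuous_intros)
  ultimately show ?thesis by simp
qed

lemma open_porth: "open {z::'a::euclidean_space. \<forall>b\<in>Basis. 0 < z \<bullet> b}"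
proof -
  have "{z::'a. \<forall>b\<in>Basis. 0 < z \<bullet> b} = (\<Inter>b\<in>Basis. {z. 0 < z \<bullet> b})" by auto
  moreover have "open (\<Inter>b\<in>(Basis::'a set). {z. 0 < z \<bullet> b})"
    by (intro open_INT finite_Basis ballI open_Collect_less continuous_intros)
  ultimately show ?thesis by simp
qed

lemma path_exit:
  fixes g :: "real \<Rightarrow> 'a::euclidean_space"
  assumes pg: "path g" and g0: "g 0 \<in> orth" and t1: "t1 \<in> {0..1}" "g t1 \<notin> orth"
  shows "\<exists>s\<in>{0..1}. g ` {0..s} \<subseteq> orth \<and> (\<exists>b\<in>Basis. g s \<bullet> b = 0)"
proof -
  define T0 where "T0 = {t\<in>{0..1}. g t \<notin> orth}"
  define s where "s = Inf T0"
  have ne: "T0 \<noteq> {}" using t1 unfolding T0_def by auto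
  have bb: "bdd_below T0" unfolding T0_def by (rule bdd_belowI[of _ 0]) auto
  have s0: "0 \<le> s" unfolding s_def using ne by (rule cInf_greatest) (auto simp: T0_def)
  have "t1 \<in> T0" using t1 by (auto simp: T0_def)
  then have "s \<le> t1" unfolding s_def using bb by (simp add: cInf_lower)
  then have s1: "s \<le> 1" using t1 by simp
  have cg: "continuous_on {0..1} g" using pg by (simp add: path_def)
  define P where "P = {0..1} \<inter> g -` orth"
  have clP: "closed P" unfolding P_def by (rule continuous_closed_preimage[OF cg]) (auto simp: closed_orth)
  have lt: "g t \<in> orth" if "0 \<le> t" "t < s" for t
  proof (rule ccontr)
    assume "g t \<notin> orth"
    then have "t \<in> T0" using that s1 unfolding T0_def by auto
    then have "s \<le> t" unfolding s_def using bb by (rule cInf_lower)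
    then show False using that by simp
  qed
  have seg: "g ` {0..s} \<subseteq> orth"
  proof (cases "s = 0")
    case True then show ?thesis using g0 by auto
  next
    case False
    then have "0 < s" using s0 by simp
    have "{0..<s} \<subseteq> P" unfolding P_def using lt s1 by auto
    then have "closure {0..<s} \<subseteq> P" using clP by (rule closure_minimal)
    then have "{0..s} \<subseteq> P" using \<open>0 < s\<close> by simp
    then show ?thesis unfolding P_def by auto
  qed
  then have gs: "g s \<in> orth" using s0 by auto
  have bd: "\<exists>b\<in>Basis. g s \<bullet> b = 0"
  proof (rule ccontr)
    assume "\<not> ?thesis"
    then have "g s \<in> {z. \<forall>b\<in>Basis. 0 < z \<bullet> b}" using gs unfolding orth_def
      by (auto simp: order_le_less)
    then obtain e where e: "e > 0" "ball (g s) e \<subseteq> {z. \<forall>b\<in>Basis. 0 < z \<bullet> b}"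
      using open_porth open_contains_ball by blast
    obtain d where d: "d > 0" "\<And>t. t \<in> {0..1} \<Longrightarrow> dist t s < d \<Longrightarrow> dist (g t) (g s) < e"
      using cg e(1) s0 s1 unfolding continuous_on_iff by (meson atLeastAtMost_iff)
    have "Inf T0 < s + d" using d(1) s_def by simp
    then obtain t where t: "t \<in> T0" "t < s + d" using ne cInf_lessD by blast
    have "s \<le> t" unfolding s_def using bb t(1) by (simp add: cInf_lower)
    then have "dist t s < d" using t(2) by (simp add: dist_real_def)
    moreover have tt: "t \<in> {0..1}" using t(1) unfolding T0_def by auto
    ultimately have "dist (g t) (g s) < e" using d(2) by blast
    then have "g t \<in> ball (g s) e" by (simp add: dist_commute)
    then have "g t \<in> orth" using e(2) unfolding orth_def by (force simp: order_le_less)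
    then show False using t(1) unfolding T0_def by auto
  qed
  show ?thesis using s0 s1 seg bd by (intro bexI[of _ s]) auto
qed



lemma liftp_rho: "liftp (rho :: 'a::euclidean_space \<Rightarrow> 'a) u"
  unfolding liftp_def
proof (intro allI impI)
  fix K :: "'a set" assume K: "path_connected K" "\<not> bounded K" "rho u \<in> K"
  show "\<exists>S. path_connected S \<and> \<not> bounded S \<and> u \<in> S \<and> rho ` S \<subseteq> K"
  proof (cases "\<exists>b\<in>Basis. u \<bullet> b < 0")
    case True
    then obtain b :: 'a where b: "b \<in> Basis" "u \<bullet> b < 0" by blast
    define S where "S = (\<lambda>t. u + t *\<^sub>R (-b)) ` {0..}"
    have "-b \<noteq> 0" using b(1) by auto
    then have "\<not> bounded S" unfolding S_def by (rule ray_unb)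
    moreover have "path_connected S" unfolding S_def by (rule ray_pc)
    moreover have "u \<in> S" unfolding S_def by (rule image_eqI[of _ _ 0]) auto
    moreover have "rho ` S \<subseteq> K"
    proof
      fix w assume "w \<in> rho ` S"
      then obtain t where t: "t \<ge> 0" "w = rho (u + t *\<^sub>R (-b))" unfolding S_def by auto
      then have "w = rho (u - t *\<^sub>R b)" by simp
      also have "\<dots> = rho u" using b t by (intro rho_ray) auto
      finally show "w \<in> K" using K(3) by simp
    qed
    ultimately show ?thesis by blast
  next
    case False
    then have uo: "u \<in> orth" unfolding orth_def by (auto simp: not_less)
    then have uK: "u \<in> K" using K(3) rho_fix by metis
    define PC where "PC = path_component_set (K \<inter> orth) u"
    show ?thesis
    proof (cases "bounded PC")
      case False
      have "u \<in> PC" unfolding PC_def using uK uo by (simp add: path_component_refl)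
      moreover have "rho ` PC \<subseteq> K"
      proof
        fix w assume "w \<in> rho ` PC"
        then obtain z where z: "z \<in> PC" "w = rho z" by auto
        have "z \<in> K \<inter> orth" using z(1) path_component_subset unfolding PC_def by blast
        then show "w \<in> K" using z(2) rho_fix[of z] by simp
      qed
      ultimately show ?thesis using False unfolding PC_def by (intro exI[of _ PC]) (auto simp: PC_def)
    next
      case True
      then obtain B where B: "\<And>z. z \<in> PC \<Longrightarrow> norm z \<le> B" unfolding bounded_iff by auto
      obtain k where k: "k \<in> K" "norm k > B" using K(2) unfolding bounded_iff by (meson not_le)
      obtain g where g: "path g" "path_image g \<subseteq> K" "pathstart g = u" "pathfinish g = k"
        using K(1) uK k(1) unfolding path_connected_def by blast
      have "\<not> path_image g \<subseteq> orth"
      proof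
        assume "path_image g \<subseteq> orth"
        then have "path_component (K \<inter> orth) u k" unfolding path_component_def using g by auto
        then have "k \<in> PC" unfolding PC_def by simp
        then show False using B k(2) by fastforce
      qed
      then obtain t1 where t1: "t1 \<in> {0..1}" "g t1 \<notin> orth" unfolding path_image_def by blast
      have g0: "g 0 \<in> orth" using g(3) uo by (simp add: pathstart_def)
      obtain s b where s: "s \<in> {0..1}" "g ` {0..s} \<subseteq> orth" "b \<in> Basis" "g s \<bullet> b = 0"
        using path_exit[OF g(1) g0 t1] by blast
      define R where "R = (\<lambda>t. g s + t *\<^sub>R (-b)) ` {0..}"
      define S where "S = g ` {0..s} \<union> R"
      have "-b \<noteq> 0" using s(3) by auto
      then have "\<not> bounded R" unfolding R_def by (rule ray_unb)
      then have ub: "\<not> bounded S" unfolding S_def using bounded_subset by blast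
      have cg: "continuous_on {0..s} g"
        using g(1) s(1) unfolding path_def by (auto elim!: continuous_on_subset)
      have "path_connected (g ` {0..s})"
        using cg by (rule path_connected_continuous_image) (simp add: convex_imp_path_connected)
      moreover have "path_connected R" unfolding R_def by (rule ray_pc)
      moreover have "g s \<in> g ` {0..s} \<inter> R" unfolding R_def using s(1)
        by (auto intro: image_eqI[of _ _ 0])
      ultimately have pc: "path_connected S" unfolding S_def
        by (intro path_connected_Un) auto
      have uS: "u \<in> S" unfolding S_def using g(3) s(1) by (auto simp: pathstart_def)
      have gK: "g t \<in> K" if "t \<in> {0..1}" for t using g(2) that unfolding path_image_def by auto
      have im: "rho ` S \<subseteq> K"
      proof
        fix w assume "w \<in> rho ` S"
        then obtain z where z: "z \<in> S" "w = rho z" by auto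
        show "w \<in> K"
        proof (cases "z \<in> g ` {0..s}")
          case True
          then obtain t where t: "t \<in> {0..s}" "z = g t" by auto
          then have "z \<in> orth" using s(2) by auto
          then have "w = z" using z(2) rho_fix by auto
          then show ?thesis using gK t s(1) by auto
        next
          case False
          then obtain t where t: "t \<ge> 0" "z = g s + t *\<^sub>R (-b)" using z(1) unfolding S_def R_def by auto
          then have "w = rho (g s - t *\<^sub>R b)" using z(2) by simp
          also have "\<dots> = rho (g s)" using s t by (intro rho_ray) auto
          also have "\<dots> = g s" using s(1,2) by (intro rho_fix) auto
          finally show ?thesis using gK s(1) by simp
        qed
      qed
      show ?thesis using pc ub uS im by blast
    qed
  qed
qed



locale netloc =
  fixes d :: "nat \<Rightarrow> nat" and A :: "nat \<Rightarrow> 'a::euclidean_space" and a :: "nat \<Rightarrow> real"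
    and W :: "nat \<Rightarrow> nat \<Rightarrow> nat \<Rightarrow> real" and c :: "nat \<Rightarrow> nat \<Rightarrow> real"
    and s :: "nat \<Rightarrow> nat \<Rightarrow> bool" and e :: "nat \<Rightarrow> 'a"
  assumes ebij: "bij_betw e {..<DIM('a)} Basis"
begin

definition embk :: "nat \<Rightarrow> (nat \<Rightarrow> real) \<Rightarrow> 'a" where
  "embk k h = (\<Sum>i<k. h i *\<^sub>R e i)"

definition lin :: "nat \<Rightarrow> 'a \<Rightarrow> nat \<Rightarrow> real" where
  "lin m v j = (if m = 1 then A j \<bullet> v else (\<Sum>i<DIM('a). W m j i * (v \<bullet> e i)))"

definition off :: "nat \<Rightarrow> nat \<Rightarrow> real" where
  "off m j = (if m = 1 then a j else c m j)"

definition pre :: "nat \<Rightarrow> 'a \<Rightarrow> nat \<Rightarrow> real" where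
  "pre m z j = lin m z j + off m j"

definition inp :: "nat \<Rightarrow> 'a \<Rightarrow> 'a" where
  "inp m x = (if m = 1 then x else embk DIM('a) (hidden d A a W c s (m - 1) x))"

definition good :: "nat \<Rightarrow> bool" where
  "good m \<longleftrightarrow> d m = DIM('a) \<and> (\<forall>j<DIM('a). \<not> s m j) \<and> (\<forall>v. (\<forall>j<d m. lin m v j = 0) \<longrightarrow> v = 0)"

lemma e_Basis: "i < DIM('a) \<Longrightarrow> e i \<in> Basis"
  using ebij unfolding bij_betw_def by auto

lemma e_inner: "i < DIM('a) \<Longrightarrow> j < DIM('a) \<Longrightarrow> e i \<bullet> e j = (if i = j then 1 else 0)"
proof -
  assume ij: "i < DIM('a)" "j < DIM('a)"
  have "inj_on e {..<DIM('a)}" using ebij unfolding bij_betw_def by auto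
  then have "(e i = e j) = (i = j)" using ij by (auto dest: inj_onD)
  then show ?thesis using e_Basis ij inner_Basis by metis
qed

lemma embk_inner:
  assumes "k \<le> DIM('a)" "i < DIM('a)"
  shows "embk k h \<bullet> e i = (if i < k then h i else 0)"
proof -
  have "embk k h \<bullet> e i = (\<Sum>i'<k. h i' * (e i' \<bullet> e i))"
    unfolding embk_def by (simp add: inner_sum_left)
  also have "\<dots> = (\<Sum>i'<k. if i' = i then h i' else 0)"
    using assms by (intro sum.cong refl) (simp add: e_inner)
  also have "\<dots> = (if i < k then h i else 0)" by (simp add: sum.delta)
  finally show ?thesis .
qed

lemma embk_add: "embk k (\<lambda>i. f i + g i) = embk k f + embk k g"
  unfolding embk_def by (simp add: scaleR_add_left sum.distrib)

lemma embk_scale: "embk k (\<lambda>i. r * f i) = r *\<^sub>R embk k f"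
  unfolding embk_def by (simp add: scaleR_sum_right)

lemma embk_cong: "(\<And>i. i < k \<Longrightarrow> f i = g i) \<Longrightarrow> embk k f = embk k g"
  unfolding embk_def by (intro sum.cong) auto

lemma rho_embk: "rho (embk DIM('a) p) = embk DIM('a) (\<lambda>i. relu (p i))"
proof -
  have "rho (embk DIM('a) p) = (\<Sum>i<DIM('a). relu (embk DIM('a) p \<bullet> e i) *\<^sub>R e i)"
    unfolding rho_def using sum.reindex_bij_betw[OF ebij, of "\<lambda>b. relu (embk DIM('a) p \<bullet> b) *\<^sub>R b"]
    by simp
  also have "\<dots> = (\<Sum>i<DIM('a). relu (p i) *\<^sub>R e i)"
    by (intro sum.cong refl) (simp add: embk_inner)
  also have "\<dots> = embk DIM('a) (\<lambda>i. relu (p i))" by (simp add: embk_def)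
  finally show ?thesis .
qed

lemma lin_add: "lin m (x + y) j = lin m x j + lin m y j"
  unfolding lin_def by (simp add: inner_add_right inner_add_left algebra_simps sum.distrib)

lemma lin_scale: "lin m (r *\<^sub>R x) j = r * lin m x j"
  unfolding lin_def by (simp add: algebra_simps sum_distrib_left)

lemma lin_linear: "linear (\<lambda>v. embk k (lin m v))"
proof (rule linearI)
  fix x y show "embk k (lin m (x + y)) = embk k (lin m x) + embk k (lin m y)"
  proof -
    have "lin m (x + y) = (\<lambda>i. lin m x i + lin m y i)" by (rule ext) (simp add: lin_add)
    then show ?thesis by (simp add: embk_add)
  qed
next
  fix r :: real and x show "embk k (lin m (r *\<^sub>R x)) = r *\<^sub>R embk k (lin m x)"
  proof -
    have "lin m (r *\<^sub>R x) = (\<lambda>i. r * lin m x i)" by (rule ext) (simp add: lin_scale)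
    then show ?thesis by (simp add: embk_scale)
  qed
qed

lemma hidden_pre:
  assumes "m \<ge> 1" "\<And>k. 1 \<le> k \<Longrightarrow> k < m \<Longrightarrow> d k = DIM('a)"
  shows "hidden d A a W c s m x j = activ (s m j) (pre m (inp m x) j)"
proof (cases m)
  case 0 then show ?thesis using assms by simp
next
  case (Suc q)
  show ?thesis
  proof (cases q)
    case 0 then show ?thesis using Suc by (simp add: pre_def lin_def off_def inp_def)
  next
    case (Suc k)
    have dk: "d (Suc k) = DIM('a)" using assms \<open>m = Suc q\<close> Suc by simp
    have "(\<Sum>i<d (Suc k). W (Suc (Suc k)) j i * hidden d A a W c s (Suc k) x i)
        = (\<Sum>i<DIM('a). W (Suc (Suc k)) j i * (embk DIM('a) (hidden d A a W c s (Suc k) x) \<bullet> e i))"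
      unfolding dk by (intro sum.cong refl) (simp add: embk_inner)
    then show ?thesis using \<open>m = Suc q\<close> Suc by (simp add: pre_def lin_def off_def inp_def)
  qed
qed

end


lemma liftp_id: "liftp (\<lambda>x. x) x"
  unfolding liftp_def by auto

context netloc begin

lemma hidden_prop:
  assumes m: "m \<ge> 1" and eq: "\<And>j. j < d m \<Longrightarrow> hidden d A a W c s m z j = hidden d A a W c s m x j"
  shows "j < d (m + k) \<Longrightarrow> hidden d A a W c s (m + k) z j = hidden d A a W c s (m + k) x j"
proof (induction k arbitrary: j)
  case 0 then show ?case using eq by simp
next
  case (Suc k)
  obtain q where q: "m + k = Suc q" using m by (metis add_is_0 not_one_le_zero not0_implies_Suc)
  have "(\<Sum>i<d (Suc q). W (Suc (Suc q)) j i * hidden d A a W c s (Suc q) z i)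
      = (\<Sum>i<d (Suc q). W (Suc (Suc q)) j i * hidden d A a W c s (Suc q) x i)"
    using Suc.IH q by (intro sum.cong refl) auto
  then show ?case using q by simp
qed

lemma aff_inj:
  assumes "\<forall>v. (\<forall>j<DIM('a). lin m v j = 0) \<longrightarrow> v = 0"
  shows "inj (\<lambda>v. embk DIM('a) (lin m v))"
proof -
  have "(\<forall>v. embk DIM('a) (lin m v) = 0 \<longrightarrow> v = 0)"
  proof (intro allI impI)
    fix v assume "embk DIM('a) (lin m v) = 0"
    then have "\<forall>j<DIM('a). lin m v j = 0" using embk_inner[of "DIM('a)"] by (metis inner_zero_left order_refl)
    then show "v = 0" using assms by blast
  qed
  then show ?thesis using linear_inj_iff_eq_0[OF lin_linear] by blast
qed

lemma aff_eq: "embk DIM('a) (pre m z) = embk DIM('a) (lin m z) + embk DIM('a) (off m)"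
proof -
  have "pre m z = (\<lambda>i. lin m z i + off m i)" by (rule ext) (simp add: pre_def)
  then show ?thesis by (simp add: embk_add)
qed

lemma inp_lift:
  assumes "m \<ge> 1" "\<And>k. 1 \<le> k \<Longrightarrow> k < m \<Longrightarrow> good k"
  shows "liftp (inp m) x"
  using assms
proof (induction m arbitrary: x)
  case 0 then show ?case by simp
next
  case (Suc q)
  show ?case
  proof (cases "q = 0")
    case True
    have "inp (Suc q) = (\<lambda>x. x)" using True by (simp add: inp_def fun_eq_iff)
    then show ?thesis by (simp add: liftp_id)
  next
    case False
    then have q1: "q \<ge> 1" by simp
    have gq: "good q" using Suc.prems q1 by simp
    have IH: "liftp (inp q) x" using Suc.IH[OF q1] Suc.prems by simp
    have dk: "d k = DIM('a)" if "1 \<le> k" "k < q" for k using Suc.prems that by (simp add: good_def)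
    define T where "T = (\<lambda>z. embk DIM('a) (lin q z) + embk DIM('a) (off q))"
    have "inj (\<lambda>v. embk DIM('a) (lin q v))" using gq by (intro aff_inj) (simp add: good_def)
    then have lT: "liftp T y" for y unfolding T_def by (intro liftp_affine lin_linear)
    have eqf: "inp (Suc q) = rho \<circ> (T \<circ> inp q)"
    proof (rule ext)
      fix y
      have "inp (Suc q) y = embk DIM('a) (hidden d A a W c s q y)" using False by (simp add: inp_def)
      also have "\<dots> = embk DIM('a) (\<lambda>j. relu (pre q (inp q y) j))"
        using gq q1 dk by (intro embk_cong) (simp add: hidden_pre good_def activ_def)
      also have "\<dots> = rho (embk DIM('a) (pre q (inp q y)))" by (simp add: rho_embk)
      also have "\<dots> = (rho \<circ> (T \<circ> inp q)) y" by (simp add: T_def aff_eq)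
      finally show "inp (Suc q) y = (rho \<circ> (T \<circ> inp q)) y" .
    qed
    have "liftp (T \<circ> inp q) x" using IH lT by (rule liftp_comp)
    then have "liftp (rho \<circ> (T \<circ> inp q)) x" using liftp_rho by (rule liftp_comp)
    then show ?thesis using eqf by metis
  qed
qed

lemma rank:
  assumes "k \<le> DIM('a)" "\<forall>v. (\<forall>j<k. lin m v j = 0) \<longrightarrow> v = 0"
  shows "k = DIM('a)"
proof (rule ccontr)
  assume "k \<noteq> DIM('a)"
  then have k: "k < DIM('a)" using assms(1) by simp
  have "\<forall>v. embk k (lin m v) = 0 \<longrightarrow> v = 0"
  proof (intro allI impI)
    fix v assume "embk k (lin m v) = 0"
    then have "\<forall>j<k. lin m v j = 0" using embk_inner[of k] assms(1)
      by (metis inner_zero_left order_less_le_trans)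
    then show "v = 0" using assms(2) by blast
  qed
  then have "inj (\<lambda>v. embk k (lin m v))" using linear_inj_iff_eq_0[OF lin_linear] by blast
  then have "surj (\<lambda>v. embk k (lin m v))" using linear_injective_imp_surjective lin_linear by blast
  then obtain v where v: "embk k (lin m v) = e k" by (metis surjD)
  have "embk k (lin m v) \<bullet> e k = 0" using embk_inner[of k k] assms(1) k by simp
  moreover have "e k \<bullet> e k = 1" using e_inner k by simp
  ultimately show False using v by simp
qed

end


context netloc begin

lemma layer_const:
  assumes dle: "\<forall>k\<in>{1..L-1}. d k \<le> DIM('a)"
    and l0: "l0 \<in> {1..L-1}" "j0 < d l0" "s l0 j0"
  shows "\<exists>m\<in>{1..L-1}. \<exists>S. path_connected S \<and> \<not> bounded S \<and> x \<in> S \<and>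
     (\<forall>z\<in>S. \<forall>j<d m. hidden d A a W c s m z j = hidden d A a W c s m x j)"
proof -
  define m where "m = (LEAST m. 1 \<le> m \<and> \<not> good m)"
  have ngl0: "\<not> good l0" using l0 dle by (auto simp: good_def)
  have P0: "1 \<le> l0 \<and> \<not> good l0" using l0(1) ngl0 by simp
  have m1: "1 \<le> m \<and> \<not> good m" unfolding m_def by (rule LeastI[of "\<lambda>m. 1 \<le> m \<and> \<not> good m" l0, OF P0])
  have mle: "m \<le> l0" unfolding m_def by (rule Least_le[of "\<lambda>m. 1 \<le> m \<and> \<not> good m" l0, OF P0])
  have prev: "good k" if "1 \<le> k" "k < m" for k
    using not_less_Least[of k "\<lambda>m. 1 \<le> m \<and> \<not> good m"] that unfolding m_def[symmetric] by auto
  have dprev: "d k = DIM('a)" if "1 \<le> k" "k < m" for k using prev[OF that] by (simp add: good_def)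
  have mL: "m \<in> {1..L-1}" using m1 mle l0 by auto
  have hp: "hidden d A a W c s m z j = activ (s m j) (pre m (inp m z) j)" for z j
    using m1 dprev by (intro hidden_pre) auto
  have li: "liftp (inp m) x" using m1 prev by (intro inp_lift) auto
  have "\<exists>S. path_connected S \<and> \<not> bounded S \<and> x \<in> S \<and>
     (\<forall>z\<in>S. \<forall>j<d m. hidden d A a W c s m z j = hidden d A a W c s m x j)"
  proof (cases "\<forall>v. (\<forall>j<d m. lin m v j = 0) \<longrightarrow> v = 0")
    case False
    then obtain w where w: "w \<noteq> 0" "\<And>j. j < d m \<Longrightarrow> lin m w j = 0" by blast
    define K where "K = (\<lambda>t. inp m x + t *\<^sub>R w) ` UNIV"
    have "path_connected K" unfolding K_def
      by (rule path_connected_continuous_image) (auto intro!: continuous_intros convex_imp_path_connected)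
    moreover have "\<not> bounded K"
    proof
      assume "bounded K"
      moreover have "(\<lambda>t. inp m x + t *\<^sub>R w) ` {0..} \<subseteq> K" unfolding K_def by auto
      ultimately show False using ray_unb[OF w(1)] bounded_subset by blast
    qed
    moreover have "inp m x \<in> K" unfolding K_def by (rule image_eqI[of _ _ 0]) auto
    ultimately obtain S where S: "path_connected S" "\<not> bounded S" "x \<in> S" "inp m ` S \<subseteq> K"
      using li unfolding liftp_def by blast
    have "\<forall>z\<in>S. \<forall>j<d m. hidden d A a W c s m z j = hidden d A a W c s m x j"
    proof (intro ballI allI impI)
      fix z j assume z: "z \<in> S" and j: "j < d m"
      obtain t where t: "inp m z = inp m x + t *\<^sub>R w" using S(4) z unfolding K_def by auto
      have "pre m (inp m z) j = pre m (inp m x) j" using t w(2)[OF j] by (simp add: pre_def lin_add lin_scale)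
      then show "hidden d A a W c s m z j = hidden d A a W c s m x j" by (simp add: hp)
    qed
    then show ?thesis using S by blast
  next
    case True
    have dm: "d m = DIM('a)" using rank[of "d m" m] True dle mL by auto
    obtain j where j: "j < DIM('a)" "s m j" using m1 True dm by (auto simp: good_def)
    define T where "T = (\<lambda>z. embk DIM('a) (lin m z) + embk DIM('a) (off m))"
    have "inj (\<lambda>v. embk DIM('a) (lin m v))" using True dm by (intro aff_inj) simp
    then have lT: "liftp T y" for y unfolding T_def by (intro liftp_affine lin_linear)
    have Tpre: "T z \<bullet> e i = pre m z i" if "i < DIM('a)" for z i
      using that unfolding T_def by (simp add: inner_add_left embk_inner pre_def)
    have li2: "liftp (T \<circ> inp m) x" using li lT by (rule liftp_comp)
    define p where "p = pre m (inp m x) j"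
    define sg :: real where "sg = (if p \<ge> 0 then 1 else -1)"
    define w where "w = sg *\<^sub>R e j"
    have w0: "w \<noteq> 0" unfolding w_def sg_def using e_Basis[OF j(1)] by auto
    define K where "K = (\<lambda>t. T (inp m x) + t *\<^sub>R w) ` {0..}"
    have "path_connected K" unfolding K_def by (rule ray_pc)
    moreover have "\<not> bounded K" unfolding K_def by (rule ray_unb[OF w0])
    moreover have "(T \<circ> inp m) x \<in> K" unfolding K_def by (rule image_eqI[of _ _ 0]) auto
    ultimately obtain S where S: "path_connected S" "\<not> bounded S" "x \<in> S" "(T \<circ> inp m) ` S \<subseteq> K"
      using li2 unfolding liftp_def by blast
    have "\<forall>z\<in>S. \<forall>i<d m. hidden d A a W c s m z i = hidden d A a W c s m x i"
    proof (intro ballI allI impI)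
      fix z i assume z: "z \<in> S" and i: "i < d m"
      obtain t where t: "t \<ge> 0" "T (inp m z) = T (inp m x) + t *\<^sub>R w" using S(4) z unfolding K_def by auto
      have i': "i < DIM('a)" using i dm by simp
      have "pre m (inp m z) i = T (inp m z) \<bullet> e i" using Tpre i' by simp
      also have "\<dots> = pre m (inp m x) i + t * sg * (e j \<bullet> e i)"
        using t Tpre[OF i'] by (simp add: inner_add_left w_def)
      finally have pz: "pre m (inp m z) i = pre m (inp m x) i + (if i = j then t * sg else 0)"
        using e_inner[OF j(1) i'] by auto
      show "hidden d A a W c s m z i = hidden d A a W c s m x i"
      proof (cases "i = j")
        case False then show ?thesis using pz by (simp add: hp)
      next
        case True
        have "step (p + t * sg) = step p" using t(1) unfolding sg_def step_def by auto
        then show ?thesis using pz True j(2) by (simp add: hp activ_def p_def)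
      qed
    qed
    then show ?thesis using S by blast
  qed
  then show ?thesis using mL by blast
qed

end


theorem lemma15:
  fixes L :: nat and d :: "nat \<Rightarrow> nat"
    and A :: "nat \<Rightarrow> 'a::euclidean_space" and a :: "nat \<Rightarrow> real"
    and W :: "nat \<Rightarrow> nat \<Rightarrow> nat \<Rightarrow> real" and c :: "nat \<Rightarrow> nat \<Rightarrow> real"
    and s :: "nat \<Rightarrow> nat \<Rightarrow> bool"
    and V :: "nat \<Rightarrow> 'b::euclidean_space" and v :: 'b
    and y :: 'b and C :: "'a set"
  assumes "L \<ge> 2"
    and "width L d = DIM('a)"
    and "\<exists>l\<in>{1..L - 1}. \<exists>j<d l. s l j"
    and "C \<in> components (net L d A a W c s V v -` {y})"
  shows "\<not> bounded C"
proof -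
  obtain e :: "nat \<Rightarrow> 'a" where e: "bij_betw e {..<DIM('a)} Basis"
    using ex_bij_betw_nat_finite[OF finite_Basis] by (auto simp: atLeast0LessThan)
  interpret netloc d A a W c s e by unfold_locales (rule e)
  have dle: "\<forall>k\<in>{1..L-1}. d k \<le> DIM('a)"
    using assms(2) unfolding width_def by (metis Max_ge finite_atLeastAtMost finite_imageI imageI)
  obtain l0 j0 where l0: "l0 \<in> {1..L-1}" "j0 < d l0" "s l0 j0" using assms(3) by blast
  define X where "X = net L d A a W c s V v -` {y}"
  obtain x where x: "x \<in> X" "C = connected_component_set X x"
    using assms(4) unfolding X_def[symmetric] components_iff by blast
  obtain m S where m: "m \<in> {1..L-1}" and S: "path_connected S" "\<not> bounded S" "x \<in> S"
    "\<And>z j. z \<in> S \<Longrightarrow> j < d m \<Longrightarrow> hidden d A a W c s m z j = hidden d A a W c s m x j"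
    using layer_const[OF dle l0, of x] by blast
  have SX: "S \<subseteq> X"
  proof
    fix z assume z: "z \<in> S"
    have mk: "m + (L - 1 - m) = L - 1" using m by auto
    have "hidden d A a W c s (L - 1) z i = hidden d A a W c s (L - 1) x i" if "i < d (L - 1)" for i
      using hidden_prop[of m z x i "L - 1 - m"] m S(4)[OF z] that unfolding mk by auto
    then have "net L d A a W c s V v z = net L d A a W c s V v x"
      unfolding net_def by (intro arg_cong2[where f="(+)"] sum.cong refl) auto
    then show "z \<in> X" using x(1) unfolding X_def by simp
  qed
  have "S \<subseteq> C" unfolding x(2)
    by (rule connected_component_maximal[OF S(3) path_connected_imp_connected[OF S(1)] SX])
  then show ?thesis using S(2) bounded_subset by blast
qed

end
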